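(* Let $X$ be a finite semi-permutation, and let $X'\subseteq X$ be any point set obtained from $X$ by repeatedly removing redundant points. Let $Y$ be any feasible solution for $X'$ such that every point of $Y$ lies on a row that is active for $X'$. Then $Y$ is also a feasible solution for $X$.
   Context: Points have integer coordinates. Two points are collinear if they share an $x$- or $y$-coordinate; for non-collinear $p,q$, $\square_{p,q}$ is the smallest closed axis-parallel rectangle containing both; the pair is satisfied in $S$ if some $r\in S\setminus\{p,q\}$ lies in $\square_{p,q}$; $S$ is satisfied if all its non-collinear pairs are. A row is active for $X$ if it contains a point of $X$; $X$ is a semi-permutation if each active row contains exactly one point of $X$. $Y$ is a feasible solution for $X$ if $X\cup Y$ is satisfied. Writing a semi-permutation as $X=\{p_1,\dots,p_m\}$ with $p_1.y<\dots<p_m.y$, a point $p_i$ (with $1<i<m$) is redundant if $p_{i-1}.x=p_i.x=p_{i+1}.x$; "repeatedly removing redundant points" means iteratively deleting a point that is redundant in the current set. *)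

theory Defs
  imports Main
begin

text \<open>Points are pairs of integers (x, y): fst = x-coordinate, snd = y-coordinate.
  A row is a horizontal line, identified by its y-coordinate.\<close>
type_synonym point = "int \<times> int"

definition collinear :: "point \<Rightarrow> point \<Rightarrow> bool" where
  "collinear p q \<longleftrightarrow> fst p = fst q \<or> snd p = snd q"

definition box :: "point \<Rightarrow> point \<Rightarrow> point set" where
  "box p q = {r. min (fst p) (fst q) \<le> fst r \<and> fst r \<le> max (fst p) (fst q) \<and>
                 min (snd p) (snd q) \<le> snd r \<and> snd r \<le> max (snd p) (snd q)}"

definition pair_satisfied :: "point set \<Rightarrow> point \<Rightarrow> point \<Rightarrow> bool" where
  "pair_satisfied S p q \<longleftrightarrow> (\<exists>r \<in> S - {p, q}. r \<in> box p q)"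

definition satisfied :: "point set \<Rightarrow> bool" where
  "satisfied S \<longleftrightarrow> (\<forall>p\<in>S. \<forall>q\<in>S. \<not> collinear p q \<longrightarrow> pair_satisfied S p q)"

definition active_rows :: "point set \<Rightarrow> int set" where
  "active_rows X = snd ` X"

definition semi_permutation :: "point set \<Rightarrow> bool" where
  "semi_permutation X \<longleftrightarrow> (\<forall>p\<in>X. \<forall>q\<in>X. snd p = snd q \<longrightarrow> p = q)"

definition feasible_solution :: "point set \<Rightarrow> point set \<Rightarrow> bool" where
  "feasible_solution X Y \<longleftrightarrow> satisfied (X \<union> Y)"

definition redundant :: "point set \<Rightarrow> point \<Rightarrow> bool" where
  "redundant X p \<longleftrightarrow> p \<in> X \<and>
     (\<exists>a\<in>X. \<exists>b\<in>X. snd a < snd p \<and> snd p < snd b \<and>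
        \<not> (\<exists>c\<in>X. snd a < snd c \<and> snd c < snd p) \<and>
        \<not> (\<exists>c\<in>X. snd p < snd c \<and> snd c < snd b) \<and>
        fst a = fst p \<and> fst p = fst b)"

definition remove_redundant_step :: "point set \<Rightarrow> point set \<Rightarrow> bool" where
  "remove_redundant_step X X' \<longleftrightarrow> (\<exists>p. redundant X p \<and> X' = X - {p})"

end

theory Submission
  imports Defs
begin

lemma box_sym: "box p q = box q p"
  unfolding box_def by (auto simp: min.commute max.commute)

lemma one_step:
  assumes red: "redundant X p"
    and sat: "satisfied ((X - {p}) \<union> Y)"
    and rows: "\<forall>y\<in>Y. snd y \<in> snd ` (X - {p})"
  shows "satisfied (X \<union> Y)"
proof -
  from red obtain a b where pX: "p \<in> X" and aX: "a \<in> X" and bX: "b \<in> X"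
    and ay: "snd a < snd p" and by': "snd p < snd b"
    and na: "\<not> (\<exists>c\<in>X. snd a < snd c \<and> snd c < snd p)"
    and nb: "\<not> (\<exists>c\<in>X. snd p < snd c \<and> snd c < snd b)"
    and ax: "fst a = fst p" and bx: "fst p = fst b"
    unfolding redundant_def by blast
  have S: "X \<union> Y = insert p ((X - {p}) \<union> Y)" using pX by blast
  have key: "pair_satisfied (X \<union> Y) p q" if qS: "q \<in> X \<union> Y" and nc: "\<not> collinear p q" for q
  proof -
    from nc have qx: "fst q \<noteq> fst p" and qy: "snd q \<noteq> snd p" unfolding collinear_def by auto
    have qnot: "\<not> (snd a < snd q \<and> snd q < snd b)"
    proof
      assume h: "snd a < snd q \<and> snd q < snd b"
      have "q \<noteq> p" using qx by auto
      then have "\<exists>c\<in>X - {p}. snd c = snd q"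
      proof (cases "q \<in> X")
        case True then show ?thesis using \<open>q \<noteq> p\<close> by blast
      next
        case False then have "q \<in> Y" using qS by blast
        then show ?thesis using rows by (metis (no_types, lifting) image_iff)
      qed
      then obtain c where "c \<in> X" "snd c = snd q" by blast
      then show False using na nb h qy by (metis linorder_neqE)
    qed
    show ?thesis
    proof (cases "snd q > snd p")
      case True
      then have "snd b \<le> snd q" using qnot ay by linarith
      then have "b \<in> box p q" using True by' bx unfolding box_def by auto
      moreover have "b \<noteq> p" "b \<noteq> q" using by' qx bx by auto
      ultimately show ?thesis unfolding pair_satisfied_def using bX by blast
    next
      case False
      then have "snd q < snd p" using qy by auto
      then have "snd q \<le> snd a" using qnot by' by linarith
      then have "a \<in> box p q" using \<open>snd q < snd p\<close> ay ax unfolding box_def by auto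
      moreover have "a \<noteq> p" "a \<noteq> q" using ay qx ax by auto
      ultimately show ?thesis unfolding pair_satisfied_def using aX by blast
    qed
  qed
  show ?thesis unfolding satisfied_def
  proof (intro ballI impI)
    fix u v assume u: "u \<in> X \<union> Y" and v: "v \<in> X \<union> Y" and nc: "\<not> collinear u v"
    show "pair_satisfied (X \<union> Y) u v"
    proof (cases "u = p")
      case True then show ?thesis using key v nc by blast
    next
      case up: False
      show ?thesis
      proof (cases "v = p")
        case True
        have "\<not> collinear p u" using nc True unfolding collinear_def by auto
        then have "pair_satisfied (X \<union> Y) p u" using key u by blast
        then show ?thesis using True unfolding pair_satisfied_def by (auto simp: box_sym)
      next
        case False
        have "u \<in> (X - {p}) \<union> Y" "v \<in> (X - {p}) \<union> Y" using u v up False by auto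
        then have "pair_satisfied ((X - {p}) \<union> Y) u v" using sat nc unfolding satisfied_def by blast
        then show ?thesis unfolding pair_satisfied_def by blast
      qed
    qed
  qed
qed

lemma chain_sub: "remove_redundant_step\<^sup>*\<^sup>* X X' \<Longrightarrow> X' \<subseteq> X"
  by (induction rule: rtranclp_induct) (auto simp: remove_redundant_step_def)

theorem lemma6p3:
  fixes X X' Y :: "point set"
  assumes "finite X"
    and "semi_permutation X"
    and "remove_redundant_step\<^sup>*\<^sup>* X X'"
    and "finite Y"
    and "feasible_solution X' Y"
    and "\<forall>y\<in>Y. snd y \<in> active_rows X'"
  shows "feasible_solution X Y"
  using assms(3)
proof (induction rule: converse_rtranclp_induct)
  case base
  then show ?case using assms(5) by simp
next
  case (step Z Z1)
  then obtain p where red: "redundant Z p" and Z1: "Z1 = Z - {p}"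
    unfolding remove_redundant_step_def by blast
  have "X' \<subseteq> Z1" using chain_sub step(2) by blast
  then have "\<forall>y\<in>Y. snd y \<in> snd ` (Z - {p})" using assms(6) Z1 unfolding active_rows_def by blast
  then show ?case using one_step[OF red] step(3) Z1 unfolding feasible_solution_def by blast
qed

end
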